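(* Let $\alpha\in(0,1)$ be irrational with continued fraction expansion $\alpha=[a_1,a_2,a_3,\dots]$ and let $(\mathbb X_\alpha,S)$ be the Sturmian subshift of slope $\alpha$. Let $(\mathbb X',S')$ be a $p$-periodic subshift over a finite alphabet, $T=S\times S'$, $\rho$ a $T$-ergodic probability measure on $\mathbb X_\alpha\times\mathbb X'$, and $f:\mathbb X_\alpha\times\mathbb X'\to\mathbb R$ locally constant, i.e. $f(x,x')=g(x_n\cdots x_{n+k-1},x')$ for some $n,k,g$. If $\limsup_{n\to\infty}a_n\ge 4p$, then for $\rho$-almost every $\omega$, $H_\omega=\Delta+V_\omega$ with $V_\omega(j)=f(T^j\omega)$ has no eigenvalues.
   Context: $\Delta$ is the discrete Laplacian $(\Delta\psi)(n)=\psi(n+1)+\psi(n-1)$. For $\theta\in[0,1)$, $s_n(\alpha,\theta)=\chi_{[1-\alpha,1)}(n\alpha+\theta\bmod1)$ and $s'_n(\alpha,\theta)=\chi_{(1-\alpha,1]}(n\alpha+\theta\bmod 1)$; $\mathbb X_\alpha=\{s(\alpha,\theta)\}_\theta\cup\{s'(\alpha,\theta)\}_\theta\subseteq\{0,1\}^{\mathbb Z}$ with left shift $S$. $\alpha=1/(a_1+1/(a_2+\cdots))$. A $p$-periodic subshift is the set of translates of one $p$-periodic sequence. *)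

theory Defs
  imports "HOL-Probability.Probability"
begin

(* x mod 1 with values in [0,1): frac x.  x mod 1 with values in (0,1]: *)
definition mod1_up :: "real \<Rightarrow> real" where
  "mod1_up x = x - of_int (\<lceil>x\<rceil> - 1)"

definition sturm_s :: "real \<Rightarrow> real \<Rightarrow> int \<Rightarrow> nat" where
  "sturm_s \<alpha> \<theta> n = (if frac (of_int n * \<alpha> + \<theta>) \<in> {1 - \<alpha>..<1} then 1 else 0)"

definition sturm_s' :: "real \<Rightarrow> real \<Rightarrow> int \<Rightarrow> nat" where
  "sturm_s' \<alpha> \<theta> n = (if mod1_up (of_int n * \<alpha> + \<theta>) \<in> {1 - \<alpha><..1} then 1 else 0)"

definition sturmian_subshift :: "real \<Rightarrow> (int \<Rightarrow> nat) set" where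
  "sturmian_subshift \<alpha> =
     (sturm_s \<alpha>) ` {0..<1} \<union> (sturm_s' \<alpha>) ` {0..<1}"

definition shiftZ :: "int \<Rightarrow> (int \<Rightarrow> 'a) \<Rightarrow> (int \<Rightarrow> 'a)" where
  "shiftZ j x = (\<lambda>n. x (n + j))"

definition orbit_subshift :: "(int \<Rightarrow> 'a) \<Rightarrow> (int \<Rightarrow> 'a) set" where
  "orbit_subshift y = range (\<lambda>k. shiftZ k y)"

definition prodshift :: "int \<Rightarrow> (int \<Rightarrow> 'a) \<times> (int \<Rightarrow> 'b) \<Rightarrow> (int \<Rightarrow> 'a) \<times> (int \<Rightarrow> 'b)" where
  "prodshift j \<omega> = (shiftZ j (fst \<omega>), shiftZ j (snd \<omega>))"

(* product (cylinder = Borel, alphabets discrete) sigma algebra on A^Z x B^Z *)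
definition seq_pair_space :: "((int \<Rightarrow> nat) \<times> (int \<Rightarrow> 'b)) measure" where
  "seq_pair_space =
     (PiM UNIV (\<lambda>_::int. count_space (UNIV::nat set)))
       \<Otimes>\<^sub>M (PiM UNIV (\<lambda>_::int. count_space (UNIV::'b set)))"

definition ergodic_measure :: "'a measure \<Rightarrow> ('a \<Rightarrow> 'a) \<Rightarrow> bool" where
  "ergodic_measure M T \<longleftrightarrow>
     prob_space M \<and> T \<in> measurable M M \<and>
     (\<forall>A \<in> sets M. emeasure M (T -` A \<inter> space M) = emeasure M A) \<and>
     (\<forall>A \<in> sets M. T -` A \<inter> space M = A \<longrightarrow> emeasure M A = 0 \<or> emeasure M A = 1)"

(* continued fraction digits: cf_digit alpha n = a_(n+1) for alpha = [a_1,a_2,...] *)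
definition gauss_iter :: "real \<Rightarrow> nat \<Rightarrow> real" where
  "gauss_iter \<alpha> n = ((\<lambda>x. frac (1 / x)) ^^ n) \<alpha>"

definition cf_digit :: "real \<Rightarrow> nat \<Rightarrow> nat" where
  "cf_digit \<alpha> n = nat \<lfloor>1 / gauss_iter \<alpha> n\<rfloor>"

definition has_eigenvalue :: "(int \<Rightarrow> real) \<Rightarrow> bool" where
  "has_eigenvalue V \<longleftrightarrow>
     (\<exists>(E::complex) (\<psi>::int \<Rightarrow> complex).
        \<psi> \<noteq> (\<lambda>_. 0) \<and> (\<lambda>n. (cmod (\<psi> n))\<^sup>2) summable_on UNIV \<and>
        (\<forall>n. \<psi> (n + 1) + \<psi> (n - 1) + of_real (V n) * \<psi> n = E * \<psi> n))"

end

theory Submission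
  imports Defs
begin

lemma gauss_iter_Suc: "gauss_iter a (Suc n) = frac (1 / gauss_iter a n)"
  by (simp add: gauss_iter_def)

lemma gauss_iter_props:
  assumes "0 < a" "a < 1" "a \<notin> \<rat>"
  shows "0 < gauss_iter a n \<and> gauss_iter a n < 1 \<and> gauss_iter a n \<notin> \<rat>"
proof (induction n)
  case 0 then show ?case using assms by (simp add: gauss_iter_def)
next
  case (Suc n)
  let ?x = "gauss_iter a n"
  have ir: "1 / ?x \<notin> \<rat>"
  proof
    assume h: "1 / ?x \<in> \<rat>"
    have "1 / (1 / ?x) \<in> \<rat>" by (rule Rats_divide[OF Rats_1 h])
    then show False using Suc by simp
  qed
  have "frac (1 / ?x) \<notin> \<rat>"
  proof
    assume h: "frac (1 / ?x) \<in> \<rat>"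
    have "1 / ?x = frac (1 / ?x) + of_int \<lfloor>1 / ?x\<rfloor>" by (simp add: frac_def)
    also have "\<dots> \<in> \<rat>" using h by (intro Rats_add) auto
    finally show False using ir by simp
  qed
  moreover have "frac (1 / ?x) \<noteq> 0" using calculation by (metis Rats_0)
  moreover have "frac (1 / ?x) < 1" by (rule frac_lt_1)
  ultimately show ?case by (simp add: gauss_iter_Suc order_less_le)
qed

definition cfx :: "real \<Rightarrow> nat \<Rightarrow> real" where "cfx a n = gauss_iter a n"

lemma cf_digit_ge1:
  assumes "0 < a" "a < 1" "a \<notin> \<rat>"
  shows "cf_digit a n \<ge> 1"
proof -
  have "0 < gauss_iter a n" "gauss_iter a n < 1" using gauss_iter_props[OF assms] by auto
  then have "1 / gauss_iter a n > 1" by simp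
  then show ?thesis unfolding cf_digit_def by linarith
qed

lemma cf_digit_real:
  assumes "0 < a" "a < 1" "a \<notin> \<rat>"
  shows "real (cf_digit a n) = of_int \<lfloor>1 / gauss_iter a n\<rfloor>"
proof -
  have "0 < gauss_iter a n" using gauss_iter_props[OF assms] by auto
  then have "\<lfloor>1 / gauss_iter a n\<rfloor> \<ge> 0" by simp
  then show ?thesis unfolding cf_digit_def by simp
qed

lemma gauss_iter_Suc_eq:
  assumes "0 < a" "a < 1" "a \<notin> \<rat>"
  shows "gauss_iter a (Suc n) = 1 / gauss_iter a n - real (cf_digit a n)"
  by (simp add: gauss_iter_Suc cf_digit_real[OF assms] frac_def)

fun qq :: "real \<Rightarrow> nat \<Rightarrow> int" where
  "qq a 0 = 1"
| "qq a (Suc 0) = int (cf_digit a 0)"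
| "qq a (Suc (Suc n)) = int (cf_digit a (Suc n)) * qq a (Suc n) + qq a n"

fun pp :: "real \<Rightarrow> nat \<Rightarrow> int" where
  "pp a 0 = 0"
| "pp a (Suc 0) = 1"
| "pp a (Suc (Suc n)) = int (cf_digit a (Suc n)) * pp a (Suc n) + pp a n"

definition DD :: "real \<Rightarrow> nat \<Rightarrow> real" where
  "DD a n = of_int (qq a n) * a - of_int (pp a n)"

context
  fixes a :: real
  assumes a0: "0 < a" and a1: "a < 1" and ar: "a \<notin> \<rat>"
begin

lemma qq_pos: "qq a n \<ge> 1 \<and> qq a (Suc n) \<ge> 1"
proof (induction n)
  case 0 then show ?case using cf_digit_ge1[OF a0 a1 ar, of 0] by simp
next
  case (Suc n)
  have "int (cf_digit a (Suc n)) \<ge> 1" using cf_digit_ge1[OF a0 a1 ar] by simp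
  then have "int (cf_digit a (Suc n)) * qq a (Suc n) \<ge> 1"
    using Suc by (metis mult_mono' mult_1 zero_le_one order_trans one_le_numeral less_imp_le linorder_not_le not_one_le_zero)
  then show ?case using Suc by simp
qed

lemma qq_ge_n2: "qq a n \<ge> int n \<and> qq a (Suc n) \<ge> int (Suc n)"
proof (induction n)
  case 0 then show ?case using qq_pos[of 0] by simp
next
  case (Suc n)
  have "int (cf_digit a (Suc n)) \<ge> 1" using cf_digit_ge1[OF a0 a1 ar] by simp
  then have "int (cf_digit a (Suc n)) * qq a (Suc n) \<ge> qq a (Suc n)"
    using qq_pos[of n] by simp
  moreover have "qq a (Suc (Suc n)) = int (cf_digit a (Suc n)) * qq a (Suc n) + qq a n" by simp
  ultimately show ?case using Suc qq_pos[of n] by linarith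
qed

lemma qq_ge_n: "qq a n \<ge> int n" using qq_ge_n2 by blast

lemma gi_props: "0 < gauss_iter a n" "gauss_iter a n < 1" "gauss_iter a n \<notin> \<rat>"
  using gauss_iter_props[OF a0 a1 ar] by auto

lemma DD_rec2: "DD a (Suc (Suc n)) = real (cf_digit a (Suc n)) * DD a (Suc n) + DD a n"
  by (simp add: DD_def algebra_simps)

lemma DD_Suc: "DD a (Suc n) = - gauss_iter a (Suc n) * DD a n"
proof (induction n)
  case 0
  have "gauss_iter a (Suc 0) = 1 / a - real (cf_digit a 0)"
    using gauss_iter_Suc_eq[OF a0 a1 ar, of 0] by (simp add: gauss_iter_def)
  then show ?case using a0 by (simp add: DD_def gauss_iter_def field_simps)
next
  case (Suc n)
  let ?x = "gauss_iter a (Suc n)" and ?c = "real (cf_digit a (Suc n))"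
  have x0: "?x \<noteq> 0" using gi_props(1)[of "Suc n"] by simp
  have h2: "gauss_iter a (Suc (Suc n)) = 1 / ?x - ?c" by (rule gauss_iter_Suc_eq[OF a0 a1 ar])
  have "DD a (Suc (Suc n)) = ?c * (-?x * DD a n) + DD a n" using Suc by (simp add: DD_rec2)
  also have "\<dots> = -(1/?x - ?c) * (-?x * DD a n)" using x0 by (simp add: field_simps)
  finally show ?case using h2 Suc by simp
qed

lemma qq_pp_det: "qq a (Suc n) * pp a n - pp a (Suc n) * qq a n = (-1) ^ Suc n"
proof (induction n)
  case 0 then show ?case by simp
next
  case (Suc n)
  have "qq a (Suc (Suc n)) * pp a (Suc n) - pp a (Suc (Suc n)) * qq a (Suc n)
        = - (qq a (Suc n) * pp a n - pp a (Suc n) * qq a n)"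
    by (simp add: algebra_simps)
  then show ?case using Suc by simp
qed

lemma DD_nz: "DD a n \<noteq> 0"
proof
  assume "DD a n = 0"
  then have "a = of_int (pp a n) / of_int (qq a n)"
    using qq_pos[of n] by (simp add: DD_def field_simps)
  then have "a \<in> \<rat>" by (metis Rats_divide Rats_of_int)
  then show False using ar by simp
qed

lemma qq_Suc_ge: "qq a (Suc k) \<ge> int (cf_digit a k) * qq a k"
proof (cases k)
  case 0 then show ?thesis by simp
next
  case (Suc m)
  then show ?thesis using qq_pos[of m] by simp
qed

lemma best_approx:
  fixes d e :: int
  assumes d0: "d \<noteq> 0" and dq: "\<bar>d\<bar> < qq a (Suc n)"
  shows "\<bar>DD a n\<bar> \<le> \<bar>of_int d * a - of_int e\<bar>"
proof -
  define q where "q = qq a n"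
  define q' where "q' = qq a (Suc n)"
  define P where "P = pp a n"
  define P' where "P' = pp a (Suc n)"
  define \<delta> :: int where "\<delta> = (-1) ^ Suc n"
  have det: "q' * P - P' * q = \<delta>" using qq_pp_det[of n] by (simp add: q_def q'_def P_def P'_def \<delta>_def)
  have dd: "\<delta> * \<delta> = 1" by (simp add: \<delta>_def flip: power_add)
  define u where "u = \<delta> * (e * q' - d * P')"
  define v where "v = \<delta> * (d * P - e * q)"
  have du: "d = u * q + v * q'"
  proof -
    have "u * q + v * q' = \<delta> * d * (q' * P - P' * q)" by (simp add: u_def v_def algebra_simps)
    also have "\<dots> = d" using det dd by (simp add: algebra_simps)
    finally show ?thesis by simp
  qed
  have eu: "e = u * P + v * P'"
  proof -
    have "u * P + v * P' = \<delta> * e * (q' * P - P' * q)" by (simp add: u_def v_def algebra_simps)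
    also have "\<dots> = e" using det dd by (simp add: algebra_simps)
    finally show ?thesis by simp
  qed
  define x where "x = gauss_iter a (Suc n)"
  have x0: "0 < x" "x < 1" using gi_props[of "Suc n"] by (auto simp: x_def)
  have q1: "q \<ge> 1" "q' \<ge> 1" using qq_pos[of n] by (auto simp: q_def q'_def)
  have "of_int d * a - of_int e = of_int u * DD a n + of_int v * DD a (Suc n)"
    by (simp add: du eu DD_def q_def q'_def P_def P'_def algebra_simps)
  also have "\<dots> = DD a n * (of_int u - of_int v * x)"
    by (simp add: DD_Suc x_def algebra_simps)
  finally have eq: "of_int d * a - of_int e = DD a n * (of_int u - of_int v * x)" .
  have key: "\<bar>of_int u - of_int v * x\<bar> \<ge> (1::real)"
  proof (cases "v = 0")
    case True
    then have "u \<noteq> 0" using du d0 by auto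
    then have "\<bar>u\<bar> \<ge> 1" by linarith
    then show ?thesis using True by simp
  next
    case False
    show ?thesis
    proof (cases "v > 0")
      case True
      have "u < 0"
      proof (rule ccontr)
        assume "\<not> u < 0"
        then have "u * q \<ge> 0" "v * q' \<ge> q'" using q1 True by (auto simp: mult_nonneg_nonneg)
        then have "d \<ge> q'" using du by linarith
        then show False using dq q'_def by simp
      qed
      then have "of_int u \<le> (-1::real)" by simp
      moreover have "of_int v * x \<ge> 0" using True x0 by simp
      ultimately show ?thesis by linarith
    next
      case False2: False
      then have vn: "v < 0" using False by simp
      have "u > 0"
      proof (rule ccontr)
        assume "\<not> u > 0"
        then have "u * q \<le> 0" "v * q' \<le> - q'" using q1 vn
          by (auto simp: mult_nonpos_nonneg) (smt (verit) mult_le_cancel_right1 mult_minus_left)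
        then have "d \<le> - q'" using du by linarith
        then show False using dq q'_def by simp
      qed
      then have "of_int u \<ge> (1::real)" by simp
      moreover have "of_int v * x \<le> 0" using vn x0 by (simp add: mult_nonpos_nonneg)
      ultimately show ?thesis by linarith
    qed
  qed
  have "\<bar>DD a n\<bar> * 1 \<le> \<bar>DD a n\<bar> * \<bar>of_int u - of_int v * x\<bar>"
    by (rule mult_left_mono[OF key]) simp
  then show ?thesis by (simp add: eq abs_mult)
qed

end

lemma limsup_inf:
  fixes c :: "nat \<Rightarrow> nat"
  assumes ls: "limsup (\<lambda>n. ereal (real (c n))) \<ge> ereal (real M)" and M: "M > 0"
  shows "\<exists>k\<ge>K. c k \<ge> M"
proof (rule ccontr)
  assume "\<not> ?thesis"
  then have "\<forall>k\<ge>K. c k \<le> M - 1" by auto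
  then have "\<forall>\<^sub>F n in sequentially. ereal (real (c n)) \<le> ereal (real (M - 1))"
    by (auto simp: eventually_sequentially)
  then have "limsup (\<lambda>n. ereal (real (c n))) \<le> ereal (real (M - 1))" by (rule Limsup_bounded)
  with ls have "ereal (real M) \<le> ereal (real (M - 1))" by (rule order_trans)
  then have "real M \<le> real (M - 1)" by simp
  then show False using M by simp
qed


lemma ss_char:
  fixes al t :: real assumes "0 < al" "al < 1"
  shows "(frac t \<in> {1 - al..<1}) \<longleftrightarrow> \<lfloor>t + al\<rfloor> \<noteq> \<lfloor>t\<rfloor>"
proof -
  have f: "frac t = t - of_int \<lfloor>t\<rfloor>" by (simp add: frac_def)
  have "\<lfloor>t + al\<rfloor> \<ge> \<lfloor>t\<rfloor>" using assms by (intro floor_mono) simp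
  moreover have "\<lfloor>t + al\<rfloor> \<noteq> \<lfloor>t\<rfloor> \<longleftrightarrow> \<lfloor>t + al\<rfloor> \<ge> \<lfloor>t\<rfloor> + 1" using calculation by linarith
  moreover have "\<lfloor>t + al\<rfloor> \<ge> \<lfloor>t\<rfloor> + 1 \<longleftrightarrow> t + al \<ge> of_int \<lfloor>t\<rfloor> + 1"
    by (metis floor_le_iff of_int_1 of_int_add le_floor_iff)
  ultimately show ?thesis using f frac_lt_1[of t] by auto
qed

lemma ss'_char:
  fixes al t :: real assumes "0 < al" "al < 1"
  shows "(mod1_up t \<in> {1 - al<..1}) \<longleftrightarrow> \<lceil>t + al\<rceil> \<noteq> \<lceil>t\<rceil>"
proof -
  have f: "mod1_up t = t - of_int \<lceil>t\<rceil> + 1" by (simp add: mod1_up_def)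
  have c1: "of_int \<lceil>t\<rceil> - 1 < t" "t \<le> of_int \<lceil>t\<rceil>" by linarith+
  have "\<lceil>t + al\<rceil> \<ge> \<lceil>t\<rceil>" using assms by (intro ceiling_mono) simp
  moreover have "\<lceil>t + al\<rceil> \<noteq> \<lceil>t\<rceil> \<longleftrightarrow> \<lceil>t + al\<rceil> > \<lceil>t\<rceil>" using calculation by linarith
  moreover have "\<lceil>t + al\<rceil> > \<lceil>t\<rceil> \<longleftrightarrow> t + al > of_int \<lceil>t\<rceil>"
    by (metis ceiling_less_iff less_ceiling_iff)
  ultimately show ?thesis using f c1 by auto
qed

lemma floor_sep:
  fixes u u' D :: real
  assumes "\<lfloor>u\<rfloor> \<noteq> \<lfloor>u + D\<rfloor>" "\<lfloor>u'\<rfloor> \<noteq> \<lfloor>u' + D\<rfloor>"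
  shows "\<exists>w::int. \<bar>u - u' - of_int w\<bar> < \<bar>D\<bar>"
proof (cases "D > 0")
  case True
  then have "\<lfloor>u\<rfloor> \<le> \<lfloor>u + D\<rfloor>" "\<lfloor>u'\<rfloor> \<le> \<lfloor>u' + D\<rfloor>" by (auto intro: floor_mono)
  then have a: "u < of_int \<lfloor>u + D\<rfloor>" "u' < of_int \<lfloor>u' + D\<rfloor>" using assms by linarith+
  have b: "of_int \<lfloor>u + D\<rfloor> \<le> u + D" "of_int \<lfloor>u' + D\<rfloor> \<le> u' + D" by linarith+
  have "\<bar>u - u' - of_int (\<lfloor>u + D\<rfloor> - \<lfloor>u' + D\<rfloor>)\<bar> < \<bar>D\<bar>"
    unfolding of_int_diff abs_less_iff using a b True by linarith
  then show ?thesis by blast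
next
  case False
  then have "D < 0" using assms by (cases "D = 0") auto
  then have "\<lfloor>u + D\<rfloor> \<le> \<lfloor>u\<rfloor>" "\<lfloor>u' + D\<rfloor> \<le> \<lfloor>u'\<rfloor>" by (auto intro: floor_mono)
  then have a: "u + D < of_int \<lfloor>u\<rfloor>" "u' + D < of_int \<lfloor>u'\<rfloor>" using assms by linarith+
  have b: "of_int \<lfloor>u\<rfloor> \<le> u" "of_int \<lfloor>u'\<rfloor> \<le> u'" by linarith+
  have "\<bar>u - u' - of_int (\<lfloor>u\<rfloor> - \<lfloor>u'\<rfloor>)\<bar> < \<bar>D\<bar>"
    unfolding of_int_diff abs_less_iff using a b \<open>D < 0\<close> by linarith
  then show ?thesis by blast
qed

lemma ceil_sep:
  fixes u u' D :: real
  assumes "\<lceil>u\<rceil> \<noteq> \<lceil>u + D\<rceil>" "\<lceil>u'\<rceil> \<noteq> \<lceil>u' + D\<rceil>"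
  shows "\<exists>w::int. \<bar>u - u' - of_int w\<bar> < \<bar>D\<bar>"
proof -
  have "\<lfloor>-u\<rfloor> \<noteq> \<lfloor>-u + (-D)\<rfloor>" "\<lfloor>-u'\<rfloor> \<noteq> \<lfloor>-u' + (-D)\<rfloor>"
    using assms by (simp_all add: ceiling_def)
  from floor_sep[OF this] obtain w :: int where "\<bar>-u - -u' - of_int w\<bar> < \<bar>-D\<bar>" by blast
  then show ?thesis by (intro exI[of _ "-w"]) (simp add: abs_minus_commute)
qed

context
  fixes a :: real
  assumes a0: "0 < a" and a1: "a < 1" and ar: "a \<notin> \<rat>"
begin

lemma shift_qq: "of_int (m + qq a n) * a + th = (of_int m * a + th + DD a n) + of_int (pp a n)"
  by (simp add: DD_def algebra_simps)

lemma defect_s: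
  assumes "sturm_s a th m \<noteq> sturm_s a th (m + qq a n)"
  shows "\<exists>e::int. (e = 0 \<or> e = 1) \<and>
     \<lfloor>of_int m * a + th + of_int e * a\<rfloor> \<noteq> \<lfloor>of_int m * a + th + of_int e * a + DD a n\<rfloor>"
proof -
  let ?t = "of_int m * a + th" and ?D = "DD a n"
  have "frac (of_int (m + qq a n) * a + th) = frac (?t + ?D)"
    by (simp only: shift_qq frac_add_of_int_right)
  then have "(\<lfloor>?t + a\<rfloor> \<noteq> \<lfloor>?t\<rfloor>) \<noteq> (\<lfloor>?t + ?D + a\<rfloor> \<noteq> \<lfloor>?t + ?D\<rfloor>)"
    using assms ss_char[OF a0 a1, of ?t] ss_char[OF a0 a1, of "?t + ?D"]
    by (auto simp: sturm_s_def split: if_splits)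
  then have "\<lfloor>?t\<rfloor> \<noteq> \<lfloor>?t + ?D\<rfloor> \<or> \<lfloor>?t + a\<rfloor> \<noteq> \<lfloor>?t + a + ?D\<rfloor>"
    by (metis add.commute add.left_commute)
  then show ?thesis
    by (metis add_0_right mult_1 mult_zero_left of_int_0 of_int_1)
qed

lemma defect_s':
  assumes "sturm_s' a th m \<noteq> sturm_s' a th (m + qq a n)"
  shows "\<exists>e::int. (e = 0 \<or> e = 1) \<and>
     \<lceil>of_int m * a + th + of_int e * a\<rceil> \<noteq> \<lceil>of_int m * a + th + of_int e * a + DD a n\<rceil>"
proof -
  let ?t = "of_int m * a + th" and ?D = "DD a n"
  have "mod1_up (of_int (m + qq a n) * a + th) = mod1_up (?t + ?D)"
    by (simp only: shift_qq mod1_up_def ceiling_add_of_int)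
  then have "(\<lceil>?t + a\<rceil> \<noteq> \<lceil>?t\<rceil>) \<noteq> (\<lceil>?t + ?D + a\<rceil> \<noteq> \<lceil>?t + ?D\<rceil>)"
    using assms ss'_char[OF a0 a1, of ?t] ss'_char[OF a0 a1, of "?t + ?D"]
    by (auto simp: sturm_s'_def split: if_splits)
  then have "\<lceil>?t\<rceil> \<noteq> \<lceil>?t + ?D\<rceil> \<or> \<lceil>?t + a\<rceil> \<noteq> \<lceil>?t + a + ?D\<rceil>"
    by (metis add.commute add.left_commute)
  then show ?thesis
    by (metis add_0_right mult_1 mult_zero_left of_int_0 of_int_1)
qed

lemma sep_from_approx:
  fixes m m' e e' w :: int
  assumes "\<bar>(of_int m * a + th + of_int e * a) - (of_int m' * a + th + of_int e' * a) - of_int w\<bar> < \<bar>DD a n\<bar>"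
    and "e = 0 \<or> e = 1" "e' = 0 \<or> e' = 1"
  shows "\<bar>m - m'\<bar> \<le> 1 \<or> \<bar>m - m'\<bar> \<ge> qq a (Suc n) - 1"
proof -
  define d where "d = m - m' + e - e'"
  have "(of_int m * a + th + of_int e * a) - (of_int m' * a + th + of_int e' * a) - of_int w
        = of_int d * a - of_int w" by (simp add: d_def algebra_simps)
  with assms(1) have lt: "\<bar>of_int d * a - of_int w\<bar> < \<bar>DD a n\<bar>" by simp
  have "d = 0 \<or> \<bar>d\<bar> \<ge> qq a (Suc n)"
  proof (rule ccontr)
    assume "\<not> ?thesis"
    then have "d \<noteq> 0" "\<bar>d\<bar> < qq a (Suc n)" by auto
    from best_approx[OF a0 a1 ar this, of w] lt show False by simp
  qed
  then show ?thesis using assms(2,3) unfolding d_def by auto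
qed

lemma defect_sep:
  assumes x: "x = sturm_s a th \<or> x = sturm_s' a th"
    and d1: "x m \<noteq> x (m + qq a n)" and d2: "x m' \<noteq> x (m' + qq a n)"
  shows "\<bar>m - m'\<bar> \<le> 1 \<or> \<bar>m - m'\<bar> \<ge> qq a (Suc n) - 1"
  using x
proof
  assume xs: "x = sturm_s a th"
  obtain e where e: "e = 0 \<or> e = 1" "\<lfloor>of_int m * a + th + of_int e * a\<rfloor> \<noteq> \<lfloor>of_int m * a + th + of_int e * a + DD a n\<rfloor>"
    using defect_s d1 xs by blast
  obtain e' where e': "e' = 0 \<or> e' = 1" "\<lfloor>of_int m' * a + th + of_int e' * a\<rfloor> \<noteq> \<lfloor>of_int m' * a + th + of_int e' * a + DD a n\<rfloor>"
    using defect_s d2 xs by blast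
  from floor_sep[OF e(2) e'(2)] obtain w where
    "\<bar>(of_int m * a + th + of_int e * a) - (of_int m' * a + th + of_int e' * a) - of_int w\<bar> < \<bar>DD a n\<bar>" by blast
  from sep_from_approx[OF this e(1) e'(1)] show ?thesis .
next
  assume xs: "x = sturm_s' a th"
  obtain e where e: "e = 0 \<or> e = 1" "\<lceil>of_int m * a + th + of_int e * a\<rceil> \<noteq> \<lceil>of_int m * a + th + of_int e * a + DD a n\<rceil>"
    using defect_s' d1 xs by blast
  obtain e' where e': "e' = 0 \<or> e' = 1" "\<lceil>of_int m' * a + th + of_int e' * a\<rceil> \<noteq> \<lceil>of_int m' * a + th + of_int e' * a + DD a n\<rceil>"
    using defect_s' d2 xs by blast
  from ceil_sep[OF e(2) e'(2)] obtain w where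
    "\<bar>(of_int m * a + th + of_int e * a) - (of_int m' * a + th + of_int e' * a) - of_int w\<bar> < \<bar>DD a n\<bar>" by blast
  from sep_from_approx[OF this e(1) e'(1)] show ?thesis .
qed

end


type_synonym m2 = "complex \<times> complex \<times> complex \<times> complex"

fun mmul :: "m2 \<Rightarrow> m2 \<Rightarrow> m2" where
  "mmul (a,b,c,d) (e,f,g,h) = (a*e+b*g, a*f+b*h, c*e+d*g, c*f+d*h)"
fun mapp :: "m2 \<Rightarrow> complex \<times> complex \<Rightarrow> complex \<times> complex" where
  "mapp (a,b,c,d) (x,y) = (a*x+b*y, c*x+d*y)"
fun mdet :: "m2 \<Rightarrow> complex" where "mdet (a,b,c,d) = a*d - b*c"
fun mtr :: "m2 \<Rightarrow> complex" where "mtr (a,b,c,d) = a + d"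

definition Astep :: "(int \<Rightarrow> real) \<Rightarrow> complex \<Rightarrow> int \<Rightarrow> m2" where
  "Astep V E j = (E - of_real (V j), -1, 1, 0)"

fun Tm :: "(int \<Rightarrow> real) \<Rightarrow> complex \<Rightarrow> int \<Rightarrow> nat \<Rightarrow> m2" where
  "Tm V E j 0 = (1,0,0,1)"
| "Tm V E j (Suc n) = mmul (Astep V E (j + int n)) (Tm V E j n)"

definition UU :: "(int \<Rightarrow> complex) \<Rightarrow> int \<Rightarrow> complex \<times> complex" where
  "UU \<psi> j = (\<psi> j, \<psi> (j - 1))"

lemma mapp_mmul: "mapp (mmul A B) v = mapp A (mapp B v)"
  by (cases A; cases B; cases v) (simp add: algebra_simps)

lemma mdet_mmul: "mdet (mmul A B) = mdet A * mdet B"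
  by (cases A; cases B) (simp add: algebra_simps)

lemma mdet_Tm: "mdet (Tm V E j n) = 1"
  by (induction n) (simp_all add: mdet_mmul Astep_def)

lemma CH: "mapp M (mapp M v) = (mtr M * fst (mapp M v) - mdet M * fst v, mtr M * snd (mapp M v) - mdet M * snd v)"
  by (cases M; cases v) (simp add: algebra_simps)

lemma transfer:
  assumes sol: "\<forall>n. \<psi> (n + 1) + \<psi> (n - 1) + of_real (V n) * \<psi> n = E * \<psi> n"
  shows "UU \<psi> (j + int n) = mapp (Tm V E j n) (UU \<psi> j)"
proof (induction n)
  case 0 then show ?case by (cases "UU \<psi> j") (simp add: UU_def)
next
  case (Suc n)
  have e: "\<psi> (j + int n + 1) = (E - of_real (V (j + int n))) * \<psi> (j + int n) - \<psi> (j + int n - 1)"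
    using sol[rule_format, of "j + int n"] by (simp add: algebra_simps)
  have i1: "j + int (Suc n) = j + int n + 1" by simp
  have i2: "j + int n + 1 - 1 = j + int n" by simp
  have "UU \<psi> (j + int (Suc n)) = mapp (Astep V E (j + int n)) (UU \<psi> (j + int n))"
    unfolding i1 UU_def Astep_def i2 using e by simp
  then show ?case using Suc by (simp add: mapp_mmul)
qed

lemma Tm_periodic:
  assumes "\<forall>i. j \<le> i \<and> i < j + int n \<longrightarrow> V (i + Q) = V i"
  shows "Tm V E (j + Q) n = Tm V E j n"
  using assms
proof (induction n)
  case 0 then show ?case by simp
next
  case (Suc n)
  then have "Tm V E (j + Q) n = Tm V E j n" by auto
  moreover have "V (j + int n + Q) = V (j + int n)" using Suc.prems by auto
  ultimately show ?case by (simp add: Astep_def add_ac)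
qed

definition nrm :: "complex \<times> complex \<Rightarrow> real" where "nrm v = cmod (fst v) + cmod (snd v)"

lemma gordon_core:
  fixes W0 W1 W2 W3 :: "complex \<times> complex" and t :: complex
  assumes "W2 = (t * fst W1 - fst W0, t * snd W1 - snd W0)"
      and "W3 = (t * fst W2 - fst W1, t * snd W2 - snd W1)"
  shows "nrm W1 \<le> nrm W0 + nrm W2 + nrm W3 \<and> nrm W2 \<le> nrm W0 + nrm W1 + nrm W3"
proof (cases "cmod t \<ge> 1")
  case True
  have "nrm W1 \<le> cmod t * nrm W1" using mult_right_mono[OF True, of "nrm W1"] by (simp add: nrm_def)
  also have "\<dots> = cmod (t * fst W1) + cmod (t * snd W1)" by (simp add: nrm_def norm_mult algebra_simps)
  also have "\<dots> \<le> nrm W2 + nrm W0" using assms(1)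
    unfolding nrm_def
    by (smt (verit, best) diff_add_cancel fst_conv norm_triangle_ineq snd_conv)
  finally have 1: "nrm W1 \<le> nrm W0 + nrm W2 + nrm W3" unfolding nrm_def
    using norm_ge_zero[of "fst W3"] norm_ge_zero[of "snd W3"] by linarith
  have "nrm W2 \<le> cmod t * nrm W2" using mult_right_mono[OF True, of "nrm W2"] by (simp add: nrm_def)
  also have "\<dots> = cmod (t * fst W2) + cmod (t * snd W2)" by (simp add: nrm_def norm_mult algebra_simps)
  also have "\<dots> \<le> nrm W3 + nrm W1" using assms(2)
    unfolding nrm_def
    by (smt (verit, best) diff_add_cancel fst_conv norm_triangle_ineq snd_conv)
  finally have 2: "nrm W2 \<le> nrm W0 + nrm W1 + nrm W3" unfolding nrm_def
    using norm_ge_zero[of "fst W0"] norm_ge_zero[of "snd W0"] by linarith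
  from 1 2 show ?thesis ..
next
  case False
  then have t1: "cmod t \<le> 1" by simp
  have a: "cmod (t * z) \<le> cmod z" for z using t1 by (simp add: norm_mult mult_left_le_one_le)
  have 1: "nrm W1 \<le> nrm W2 + nrm W3"
  proof -
    have "fst W1 = t * fst W2 - fst W3" "snd W1 = t * snd W2 - snd W3" using assms(2) by auto
    then have "cmod (fst W1) \<le> cmod (t * fst W2) + cmod (fst W3)" "cmod (snd W1) \<le> cmod (t * snd W2) + cmod (snd W3)"
      by (metis norm_triangle_ineq4)+
    then show ?thesis using a[of "fst W2"] a[of "snd W2"] by (simp add: nrm_def)
  qed
  have 2: "nrm W2 \<le> nrm W1 + nrm W0"
  proof -
    have "cmod (fst W2) \<le> cmod (t * fst W1) + cmod (fst W0)" "cmod (snd W2) \<le> cmod (t * snd W1) + cmod (snd W0)"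
      using assms(1) by (simp_all add: norm_triangle_ineq4)
    then show ?thesis using a[of "fst W1"] a[of "snd W1"] by (simp add: nrm_def)
  qed
  have "nrm W0 \<ge> 0" "nrm W1 \<ge> 0" "nrm W3 \<ge> 0" by (simp_all add: nrm_def)
  with 1 2 show ?thesis by linarith
qed

lemma gordon_step:
  assumes sol: "\<forall>n. \<psi> (n + 1) + \<psi> (n - 1) + of_real (V n) * \<psi> n = E * \<psi> n"
    and per: "\<forall>i. s \<le> i \<and> i < s + 2 * int Q \<longrightarrow> V (i + int Q) = V i"
  shows "nrm (UU \<psi> (s + int Q)) \<le> nrm (UU \<psi> s) + nrm (UU \<psi> (s + 2 * int Q)) + nrm (UU \<psi> (s + 3 * int Q)) \<and>
         nrm (UU \<psi> (s + 2 * int Q)) \<le> nrm (UU \<psi> s) + nrm (UU \<psi> (s + int Q)) + nrm (UU \<psi> (s + 3 * int Q))"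
proof -
  define M where "M = Tm V E s Q"
  have p1: "Tm V E (s + int Q) Q = M" unfolding M_def
    by (rule Tm_periodic) (use per in auto)
  have p2: "Tm V E (s + int Q + int Q) Q = M" unfolding p1[symmetric]
    by (rule Tm_periodic) (use per in auto)
  have w1: "UU \<psi> (s + int Q) = mapp M (UU \<psi> s)" unfolding M_def by (rule transfer[OF sol])
  have w2: "UU \<psi> (s + 2 * int Q) = mapp M (UU \<psi> (s + int Q))"
    using transfer[OF sol, of "s + int Q" Q] p1 by (simp add: algebra_simps mult_2)
  have w3: "UU \<psi> (s + 3 * int Q) = mapp M (UU \<psi> (s + 2 * int Q))"
  proof -
    have e1: "s + 3 * int Q = (s + int Q + int Q) + int Q" by simp
    have e2: "s + 2 * int Q = s + int Q + int Q" by simp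
    have "UU \<psi> ((s + int Q + int Q) + int Q) = mapp (Tm V E (s + int Q + int Q) Q) (UU \<psi> (s + int Q + int Q))"
      by (rule transfer[OF sol])
    then show ?thesis unfolding e1 e2 p2 .
  qed
  have d: "mdet M = 1" unfolding M_def by (rule mdet_Tm)
  show ?thesis
    apply (rule gordon_core[where t = "mtr M"])
    using CH[of M "UU \<psi> s"] CH[of M "UU \<psi> (s + int Q)"] w1 w2 w3 d by simp_all
qed

lemma propagate_zero:
  fixes \<psi> :: "int \<Rightarrow> complex" and V :: "int \<Rightarrow> real"
  assumes sol: "\<forall>n. \<psi> (n + 1) + \<psi> (n - 1) + of_real (V n) * \<psi> n = E * \<psi> n"
    and z: "\<psi> 0 = 0" "\<psi> (-1) = 0"
  shows "\<psi> = (\<lambda>_. 0)"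
proof -
  have fw: "\<psi> (int n) = 0 \<and> \<psi> (int n - 1) = 0" for n
  proof (induction n)
    case 0 then show ?case using z by simp
  next
    case (Suc n)
    have "\<psi> (int n + 1) = E * \<psi> (int n) - of_real (V (int n)) * \<psi> (int n) - \<psi> (int n - 1)"
      using sol[rule_format, of "int n"] by (simp add: algebra_simps)
    then show ?case using Suc by (simp add: add.commute)
  qed
  have bw: "\<psi> (- int n) = 0 \<and> \<psi> (- int n - 1) = 0" for n
  proof (induction n)
    case 0 then show ?case using z by simp
  next
    case (Suc n)
    have "\<psi> (- int n - 1 - 1) = E * \<psi> (- int n - 1) - of_real (V (- int n - 1)) * \<psi> (- int n - 1) - \<psi> (- int n)"
      using sol[rule_format, of "- int n - 1"] by (simp add: algebra_simps)
    moreover have "- int (Suc n) = - int n - 1" "- int (Suc n) - 1 = - int n - 1 - 1" by simp_all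
    ultimately show ?case using Suc by (simp only:) simp
  qed
  show ?thesis
  proof
    fix m :: int
    show "\<psi> m = 0"
    proof (cases "m \<ge> 0")
      case True then show ?thesis using fw[of "nat m"] by simp
    next
      case False then show ?thesis using bw[of "nat (-m)"] by simp
    qed
  qed
qed

lemma l2_small:
  fixes \<psi> :: "int \<Rightarrow> complex"
  assumes sm: "(\<lambda>n. (cmod (\<psi> n))\<^sup>2) summable_on UNIV" and e: "e > 0"
  shows "\<exists>N. \<forall>n. \<bar>n\<bar> \<ge> N \<longrightarrow> cmod (\<psi> n) < e"
proof -
  define S where "S = {n. (cmod (\<psi> n))\<^sup>2 \<ge> e\<^sup>2}"
  have fin: "finite S"
  proof (rule ccontr)
    assume inf: "infinite S"
    define K where "K = nat \<lceil>infsum (\<lambda>n. (cmod (\<psi> n))\<^sup>2) UNIV / e\<^sup>2\<rceil> + 1"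
    obtain B where B: "B \<subseteq> S" "finite B" "card B = K" using infinite_arbitrarily_large[OF inf] by blast
    have "sum (\<lambda>n. (cmod (\<psi> n))\<^sup>2) B \<le> infsum (\<lambda>n. (cmod (\<psi> n))\<^sup>2) UNIV"
      by (rule finite_sum_le_infsum[OF sm B(2)]) auto
    moreover have "sum (\<lambda>n. (cmod (\<psi> n))\<^sup>2) B \<ge> of_nat K * e\<^sup>2"
      using sum_bounded_below[of B "e\<^sup>2" "\<lambda>n. (cmod (\<psi> n))\<^sup>2"] B(1,3) unfolding S_def by auto
    moreover have "of_nat K * e\<^sup>2 > infsum (\<lambda>n. (cmod (\<psi> n))\<^sup>2) UNIV"
    proof -
      have "of_nat K > infsum (\<lambda>n. (cmod (\<psi> n))\<^sup>2) UNIV / e\<^sup>2" unfolding K_def by linarith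
      then show ?thesis using e by (simp add: field_simps)
    qed
    ultimately show False by linarith
  qed
  define N where "N = Max (insert 0 (abs ` S)) + 1"
  have "\<forall>n. \<bar>n\<bar> \<ge> N \<longrightarrow> cmod (\<psi> n) < e"
  proof (intro allI impI)
    fix n :: int assume "\<bar>n\<bar> \<ge> N"
    have "n \<notin> S"
    proof
      assume "n \<in> S"
      then have "\<bar>n\<bar> \<le> Max (insert 0 (abs ` S))" by (intro Max_ge) (use fin in auto)
      then show False using \<open>\<bar>n\<bar> \<ge> N\<close> unfolding N_def by linarith
    qed
    then have "(cmod (\<psi> n))\<^sup>2 < e\<^sup>2" unfolding S_def by simp
    then show "cmod (\<psi> n) < e" using e by (simp add: power_less_imp_less_base)
  qed
  then show ?thesis by blast
qed


lemma gordon_no_eigen: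
  fixes V :: "int \<Rightarrow> real"
  assumes G: "\<forall>N::nat. \<exists>Q::nat. Q \<ge> N \<and>
     ((\<forall>i. - int Q \<le> i \<and> i < int Q \<longrightarrow> V (i + int Q) = V i) \<or>
      (\<forall>i. - 2 * int Q \<le> i \<and> i < 0 \<longrightarrow> V (i + int Q) = V i))"
  shows "\<not> has_eigenvalue V"
proof
  assume "has_eigenvalue V"
  then obtain E \<psi> where nz: "\<psi> \<noteq> (\<lambda>_. 0)" and sm: "(\<lambda>n. (cmod (\<psi> n))\<^sup>2) summable_on UNIV"
    and sol: "\<forall>n. \<psi> (n + 1) + \<psi> (n - 1) + of_real (V n) * \<psi> n = E * \<psi> n"
    unfolding has_eigenvalue_def by blast
  have small: "nrm (UU \<psi> 0) < 6 * e" if e: "e > 0" for e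
  proof -
    obtain N where N: "\<forall>n. \<bar>n\<bar> \<ge> N \<longrightarrow> cmod (\<psi> n) < e" using l2_small[OF sm e] by blast
    obtain Q :: nat where Q: "Q \<ge> nat N + 2" and
      per: "(\<forall>i. - int Q \<le> i \<and> i < int Q \<longrightarrow> V (i + int Q) = V i) \<or>
      (\<forall>i. - 2 * int Q \<le> i \<and> i < 0 \<longrightarrow> V (i + int Q) = V i)"
      using G by blast
    have U: "nrm (UU \<psi> j) < 2 * e" if "\<bar>j\<bar> \<ge> int Q" for j
    proof -
      have "\<bar>j\<bar> \<ge> N" "\<bar>j - 1\<bar> \<ge> N" using that Q by linarith+
      then have "cmod (\<psi> j) < e" "cmod (\<psi> (j - 1)) < e" using N by auto
      then show ?thesis by (simp add: nrm_def UU_def)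
    qed
    from per show ?thesis
    proof
      assume p: "\<forall>i. - int Q \<le> i \<and> i < int Q \<longrightarrow> V (i + int Q) = V i"
      have "\<forall>i. - int Q \<le> i \<and> i < - int Q + 2 * int Q \<longrightarrow> V (i + int Q) = V i" using p by simp
      from gordon_step[OF sol this] have
        "nrm (UU \<psi> 0) \<le> nrm (UU \<psi> (- int Q)) + nrm (UU \<psi> (int Q)) + nrm (UU \<psi> (2 * int Q))"
        by (simp add: algebra_simps)
      moreover have "nrm (UU \<psi> (- int Q)) < 2 * e" "nrm (UU \<psi> (int Q)) < 2 * e" "nrm (UU \<psi> (2 * int Q)) < 2 * e"
        by (rule U; simp)+
      ultimately show ?thesis by linarith
    next
      assume p: "\<forall>i. - 2 * int Q \<le> i \<and> i < 0 \<longrightarrow> V (i + int Q) = V i"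
      have "\<forall>i. - 2 * int Q \<le> i \<and> i < - 2 * int Q + 2 * int Q \<longrightarrow> V (i + int Q) = V i" using p by simp
      from gordon_step[OF sol this] have
        "nrm (UU \<psi> 0) \<le> nrm (UU \<psi> (- 2 * int Q)) + nrm (UU \<psi> (- int Q)) + nrm (UU \<psi> (int Q))"
        by (simp add: algebra_simps)
      moreover have "nrm (UU \<psi> (- 2 * int Q)) < 2 * e" "nrm (UU \<psi> (- int Q)) < 2 * e" "nrm (UU \<psi> (int Q)) < 2 * e"
        by (rule U; simp)+
      ultimately show ?thesis by linarith
    qed
  qed
  have "nrm (UU \<psi> 0) \<le> 0"
  proof (rule ccontr)
    assume "\<not> ?thesis"
    then have "nrm (UU \<psi> 0) / 6 > 0" by simp
    from small[OF this] show False by simp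
  qed
  then have h: "cmod (\<psi> 0) + cmod (\<psi> (-1)) \<le> 0" by (simp add: nrm_def UU_def)
  then have "cmod (\<psi> 0) = 0" "cmod (\<psi> (-1)) = 0"
    using norm_ge_zero[of "\<psi> 0"] norm_ge_zero[of "\<psi> (-1)"] by linarith+
  then have "\<psi> 0 = 0" "\<psi> (-1) = 0" by simp_all
  from propagate_zero[OF sol this] nz show False by simp
qed


definition cleanI :: "(int \<Rightarrow> nat) \<Rightarrow> int \<Rightarrow> int \<Rightarrow> int \<Rightarrow> bool" where
  "cleanI x q lo hi \<longleftrightarrow> (\<forall>m. lo \<le> m \<and> m \<le> hi \<longrightarrow> x m = x (m + q))"

definition goodw :: "int \<Rightarrow> int \<Rightarrow> int \<Rightarrow> int \<Rightarrow> (int \<Rightarrow> nat) \<Rightarrow> bool" where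
  "goodw P n0 k0 q x \<longleftrightarrow>
     cleanI x q (n0 - P * q) ((2 * P - 1) * q + n0 + k0) \<or>
     cleanI x q (n0 - 2 * P * q) ((P - 1) * q + n0 + k0)"

lemma chain:
  assumes c: "cleanI x q lo (hi + (P - 1) * q)" and P: "P \<ge> 1" and q: "q \<ge> 0"
    and m: "lo \<le> m" "m \<le> hi"
  shows "x (m + P * q) = x m"
proof -
  have "\<forall>r::nat. int r \<le> P \<longrightarrow> x (m + int r * q) = x m"
  proof
    fix r :: nat
    show "int r \<le> P \<longrightarrow> x (m + int r * q) = x m"
    proof (induction r)
      case 0 then show ?case by simp
    next
      case (Suc r)
      show ?case
      proof
        assume r: "int (Suc r) \<le> P"
        then have ih: "x (m + int r * q) = x m" using Suc by simp
        have "int r * q \<le> (P - 1) * q" using r q by (intro mult_right_mono) auto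
        moreover have "int r * q \<ge> 0" using q by simp
        ultimately have "lo \<le> m + int r * q" "m + int r * q \<le> hi + (P - 1) * q" using m by linarith+
        then have "x (m + int r * q) = x (m + int r * q + q)" using c unfolding cleanI_def by blast
        then show "x (m + int (Suc r) * q) = x m" using ih by (simp add: algebra_simps)
      qed
    qed
  qed
  then show ?thesis using P by (metis nonneg_int_cases order_refl zero_le_one order_trans)
qed

lemma periodic_shift:
  fixes y :: "int \<Rightarrow> 'b"
  assumes "\<forall>n. y (n + int p) = y n"
  shows "y (n + int p * t) = y n"
proof -
  have pos: "y (n + int p * int s) = y n" for n and s :: nat
    by (induction s arbitrary: n) (simp_all add: algebra_simps assms[rule_format, of "_ + _", simplified add.assoc] ,
        metis add.assoc add.commute assms)
  show ?thesis
  proof (cases "t \<ge> 0")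
    case True then show ?thesis using pos[of n "nat t"] by simp
  next
    case False
    have "y (n + int p * t) = y (n + int p * t + int p * int (nat (-t)))"
      using pos[of "n + int p * t" "nat (-t)"] by simp
    also have "n + int p * t + int p * int (nat (-t)) = n" using False by simp
    finally show ?thesis .
  qed
qed

lemma eigen_shift:
  assumes "has_eigenvalue V"
  shows "has_eigenvalue (\<lambda>i. V (i + j))"
proof -
  obtain E \<psi> where nz: "\<psi> \<noteq> (\<lambda>_. 0)" and sm: "(\<lambda>n. (cmod (\<psi> n))\<^sup>2) summable_on UNIV"
    and sol: "\<forall>n. \<psi> (n + 1) + \<psi> (n - 1) + of_real (V n) * \<psi> n = E * \<psi> n"
    using assms unfolding has_eigenvalue_def by blast
  define \<phi> where "\<phi> i = \<psi> (i + j)" for i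
  have "\<phi> \<noteq> (\<lambda>_. 0)"
  proof
    assume "\<phi> = (\<lambda>_. 0)"
    then have "\<psi> m = 0" for m
    proof -
      have "\<phi> (m - j) = 0" using \<open>\<phi> = (\<lambda>_. 0)\<close> by simp
      then show ?thesis by (simp add: \<phi>_def)
    qed
    then show False using nz by auto
  qed
  moreover have "(\<lambda>n. (cmod (\<phi> n))\<^sup>2) summable_on UNIV"
  proof -
    have b: "bij_betw (\<lambda>i. i + j) UNIV UNIV"
      by (rule bij_betwI[where g = "\<lambda>i. i - j"]) auto
    have "((\<lambda>n. (cmod (\<psi> n))\<^sup>2) \<circ> (\<lambda>i. i + j)) summable_on UNIV"
      using summable_on_reindex_bij_betw[OF b, of "\<lambda>n. (cmod (\<psi> n))\<^sup>2"] sm by (simp add: comp_def)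
    then show ?thesis by (simp add: \<phi>_def comp_def)
  qed
  moreover have "\<forall>n. \<phi> (n + 1) + \<phi> (n - 1) + of_real (V (n + j)) * \<phi> n = E * \<phi> n"
  proof
    fix n
    show "\<phi> (n + 1) + \<phi> (n - 1) + of_real (V (n + j)) * \<phi> n = E * \<phi> n"
      using sol[rule_format, of "n + j"] by (simp add: \<phi>_def algebra_simps)
  qed
  ultimately show ?thesis unfolding has_eigenvalue_def by blast
qed


lemma no_eigen_from_good:
  fixes x :: "int \<Rightarrow> nat" and x' :: "int \<Rightarrow> 'b" and G :: "nat list \<Rightarrow> (int \<Rightarrow> 'b) \<Rightarrow> real"
    and V :: "int \<Rightarrow> real"
  assumes P: "P \<ge> 1"
    and Vdef: "\<forall>j. V j = G (map (\<lambda>i. x (n0 + int i + j)) [0..<k0]) (shiftZ j x')"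
    and per: "\<forall>j t. shiftZ (j + P * t) x' = shiftZ j x'"
    and good: "\<forall>N::nat. \<exists>q. q \<ge> int N \<and> goodw P n0 (int k0) q x"
  shows "\<not> has_eigenvalue V"
proof (rule gordon_no_eigen, intro allI)
  fix N :: nat
  obtain q where qN: "q \<ge> int N" and gq: "goodw P n0 (int k0) q x" using good by blast
  have q0: "q \<ge> 0" using qN by simp
  define Q where "Q = nat (P * q)"
  have PQ: "int Q = P * q" unfolding Q_def using P q0 by simp
  have "P * q \<ge> q" using P q0 by (simp add: mult_le_cancel_right1 mult_right_mono[of 1 P q, simplified])
  then have QN: "Q \<ge> N" using qN PQ by linarith
  have Vper: "V (i + int Q) = V i" if xs: "\<forall>t<k0. x (n0 + int t + i + P * q) = x (n0 + int t + i)" for i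
  proof -
    have m: "map (\<lambda>t. x (n0 + int t + (i + int Q))) [0..<k0] = map (\<lambda>t. x (n0 + int t + i)) [0..<k0]"
    proof (rule map_cong[OF refl])
      fix t assume "t \<in> set [0..<k0]"
      then have "t < k0" by simp
      then show "x (n0 + int t + (i + int Q)) = x (n0 + int t + i)"
        using xs PQ by (simp add: add.assoc)
    qed
    have sh: "shiftZ (i + int Q) x' = shiftZ i x'" using per PQ by simp
    have "V (i + int Q) = G (map (\<lambda>t. x (n0 + int t + (i + int Q))) [0..<k0]) (shiftZ (i + int Q) x')"
      using Vdef by blast
    also have "\<dots> = G (map (\<lambda>t. x (n0 + int t + i)) [0..<k0]) (shiftZ i x')" by (simp only: m sh)
    also have "\<dots> = V i" using Vdef by simp
    finally show ?thesis .
  qed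
  from gq show "\<exists>Q\<ge>N. (\<forall>i. - int Q \<le> i \<and> i < int Q \<longrightarrow> V (i + int Q) = V i) \<or>
      (\<forall>i. - 2 * int Q \<le> i \<and> i < 0 \<longrightarrow> V (i + int Q) = V i)"
    unfolding goodw_def
  proof
    assume c: "cleanI x q (n0 - P * q) ((2 * P - 1) * q + n0 + int k0)"
    have c': "cleanI x q (n0 - P * q) ((n0 + int k0 + P * q) + (P - 1) * q)"
      using c by (simp add: algebra_simps)
    have "\<forall>i. - int Q \<le> i \<and> i < int Q \<longrightarrow> V (i + int Q) = V i"
    proof (intro allI impI)
      fix i assume i: "- int Q \<le> i \<and> i < int Q"
      show "V (i + int Q) = V i"
      proof (rule Vper, intro allI impI)
        fix t assume "t < k0"
        then show "x (n0 + int t + i + P * q) = x (n0 + int t + i)"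
          using chain[OF c' P q0, of "n0 + int t + i"] i PQ by simp
      qed
    qed
    then show ?thesis using QN by blast
  next
    assume c: "cleanI x q (n0 - 2 * P * q) ((P - 1) * q + n0 + int k0)"
    have c': "cleanI x q (n0 - 2 * P * q) ((n0 + int k0) + (P - 1) * q)"
      using c by (simp add: algebra_simps)
    have "\<forall>i. - 2 * int Q \<le> i \<and> i < 0 \<longrightarrow> V (i + int Q) = V i"
    proof (intro allI impI)
      fix i assume i: "- 2 * int Q \<le> i \<and> i < 0"
      show "V (i + int Q) = V i"
      proof (rule Vper, intro allI impI)
        fix t assume "t < k0"
        then show "x (n0 + int t + i + P * q) = x (n0 + int t + i)"
          using chain[OF c' P q0, of "n0 + int t + i"] i PQ by simp
      qed
    qed
    then show ?thesis using QN by blast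
  qed
qed


lemma clean_shift: "cleanI (shiftZ j x) q lo hi \<longleftrightarrow> cleanI x q (lo + j) (hi + j)"
  unfolding cleanI_def shiftZ_def
proof safe
  fix m assume h: "\<forall>m. lo \<le> m \<and> m \<le> hi \<longrightarrow> x (m + j) = x (m + q + j)"
    and m: "lo + j \<le> m" "m \<le> hi + j"
  show "x m = x (m + q)" using h[rule_format, of "m - j"] m by (simp add: algebra_simps)
next
  fix m assume h: "\<forall>m. lo + j \<le> m \<and> m \<le> hi + j \<longrightarrow> x m = x (m + q)"
    and m: "lo \<le> m" "m \<le> hi"
  show "x (m + j) = x (m + q + j)" using h[rule_format, of "m + j"] m by (simp add: algebra_simps)
qed

lemma not_clean: "\<not> cleanI x q lo hi \<Longrightarrow> \<exists>d. x d \<noteq> x (d + q) \<and> lo \<le> d \<and> d \<le> hi"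
  unfolding cleanI_def by blast

lemma bad_count:
  fixes x :: "int \<Rightarrow> nat"
  assumes P: "P \<ge> 1" and q: "q \<ge> 2 * k0 + 8" and k0: "k0 \<ge> 0"
    and sep: "\<forall>m m'. x m \<noteq> x (m + q) \<and> x m' \<noteq> x (m' + q) \<longrightarrow> \<bar>m - m'\<bar> \<le> 1 \<or> \<bar>m - m'\<bar> \<ge> 4 * P * q - 1"
  shows "card {i::nat. i < nat (2 * P * q) \<and> \<not> goodw P n0 k0 q (shiftZ (int i) x)}
           \<le> nat ((2 * P - 1) * q + k0 + 4)"
proof -
  define loA where "loA = n0 - P * q"
  define hiA where "hiA = (2 * P - 1) * q + n0 + k0"
  define loB where "loB = n0 - 2 * P * q"
  define hiB where "hiB = (P - 1) * q + n0 + k0"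
  define R where "R = nat (2 * P * q)"
  have Pq: "P * q \<ge> q" using P q k0 by (simp add: mult_right_mono[of 1 P q, simplified])
  have R: "int R = 2 * P * q" unfolding R_def using Pq q k0 by simp
  have badD: "\<exists>d. x d \<noteq> x (d + q) \<and> loA + j \<le> d \<and> d \<le> hiB + 1 + j"
    if b: "\<not> goodw P n0 k0 q (shiftZ j x)" for j
  proof -
    from b have "\<not> cleanI x q (loA + j) (hiA + j)" "\<not> cleanI x q (loB + j) (hiB + j)"
      unfolding goodw_def clean_shift loA_def hiA_def loB_def hiB_def by auto
    from not_clean[OF this(1)] not_clean[OF this(2)] obtain d1 d2 where
      d1: "x d1 \<noteq> x (d1 + q)" "loA + j \<le> d1" "d1 \<le> hiA + j" and
      d2: "x d2 \<noteq> x (d2 + q)" "loB + j \<le> d2" "d2 \<le> hiB + j" by blast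
    have "\<bar>d1 - d2\<bar> < 4 * P * q - 1"
      using d1 d2 q k0 unfolding loA_def hiA_def loB_def hiB_def by (simp add: algebra_simps abs_if)
    then have "\<bar>d1 - d2\<bar> \<le> 1" using sep d1(1) d2(1) by force
    then show ?thesis using d1 d2 by (intro exI[of _ d1]) auto
  qed
  define J where "J = {i::nat. i < R \<and> \<not> goodw P n0 k0 q (shiftZ (int i) x)}"
  have finJ: "finite J" unfolding J_def by auto
  show ?thesis
  proof (cases "J = {}")
    case True
    then have "card J \<le> nat ((2 * P - 1) * q + k0 + 4)" by simp
    then show ?thesis unfolding J_def R_def .
  next
    case False
    then obtain i1 where i1: "i1 \<in> J" by blast
    then obtain d1 where d1: "x d1 \<noteq> x (d1 + q)" "loA + int i1 \<le> d1" "d1 \<le> hiB + 1 + int i1"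
      using badD unfolding J_def by blast
    have sub: "int ` J \<subseteq> {d1 - hiB - 2 .. d1 + 1 - loA}"
    proof
      fix j assume "j \<in> int ` J"
      then obtain i where i: "i \<in> J" "j = int i" by blast
      then obtain d where d: "x d \<noteq> x (d + q)" "loA + int i \<le> d" "d \<le> hiB + 1 + int i"
        using badD unfolding J_def by blast
      have "int i < int R" "int i1 < int R" using i(1) i1 unfolding J_def by auto
      then have "\<bar>d - d1\<bar> < 4 * P * q - 1"
        using d d1 q k0 R unfolding loA_def hiA_def loB_def hiB_def by (simp add: algebra_simps abs_if)
      then have "\<bar>d - d1\<bar> \<le> 1" using sep d(1) d1(1) by force
      then show "j \<in> {d1 - hiB - 2 .. d1 + 1 - loA}" using d i(2) by auto
    qed
    have "card J = card (int ` J)" by (simp add: card_image)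
    also have "\<dots> \<le> card {d1 - hiB - 2 .. d1 + 1 - loA}" by (rule card_mono[OF _ sub]) simp
    also have "\<dots> = nat ((2 * P - 1) * q + k0 + 4)"
      unfolding loA_def hiB_def by (simp add: algebra_simps)
    finally show ?thesis unfolding J_def R_def .
  qed
qed


lemma space_seq_pair: "space (seq_pair_space :: ((int \<Rightarrow> nat) \<times> (int \<Rightarrow> 'b)) measure) = UNIV"
  unfolding seq_pair_space_def by (simp add: space_pair_measure space_PiM)

lemma shiftZ_shiftZ: "shiftZ i (shiftZ j x) = shiftZ (i + j) x"
  by (simp add: shiftZ_def algebra_simps)

lemma shiftZ_0: "shiftZ 0 x = x" by (simp add: shiftZ_def)

lemma prodshift_add: "prodshift i (prodshift j \<omega>) = prodshift (i + j) \<omega>"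
  by (simp add: prodshift_def shiftZ_shiftZ)

lemma sturm_s_shift: "shiftZ j (sturm_s al th) = sturm_s al (frac (th + of_int j * al))"
  by (rule ext) (simp add: shiftZ_def sturm_s_def frac_add_simps algebra_simps)

lemma mod1_up_frac: "mod1_up (u + frac v) = mod1_up (u + v)"
proof -
  have h: "u + v = (u + frac v) + of_int \<lfloor>v\<rfloor>" by (simp add: frac_def)
  have "mod1_up ((u + frac v) + of_int \<lfloor>v\<rfloor>) = mod1_up (u + frac v)"
    by (simp add: mod1_up_def ceiling_add_of_int)
  then show ?thesis by (simp only: h)
qed

lemma sturm_s'_shift: "shiftZ j (sturm_s' al th) = sturm_s' al (frac (th + of_int j * al))"
proof (rule ext)
  fix m
  have "mod1_up (of_int m * al + frac (th + of_int j * al)) = mod1_up (of_int m * al + (th + of_int j * al))"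
    by (rule mod1_up_frac)
  then show "shiftZ j (sturm_s' al th) m = sturm_s' al (frac (th + of_int j * al)) m"
    by (simp add: shiftZ_def sturm_s'_def algebra_simps)
qed

lemma sturm_shift_in: "x \<in> sturmian_subshift al \<Longrightarrow> shiftZ j x \<in> sturmian_subshift al"
  unfolding sturmian_subshift_def
  by (auto simp: sturm_s_shift sturm_s'_shift frac_lt_1)

lemma orbit_shift_in: "x \<in> orbit_subshift y \<Longrightarrow> shiftZ j x \<in> orbit_subshift y"
  unfolding orbit_subshift_def by (auto simp: shiftZ_shiftZ)

lemma prodshift_in:
  "\<omega> \<in> sturmian_subshift al \<times> orbit_subshift y \<Longrightarrow> prodshift j \<omega> \<in> sturmian_subshift al \<times> orbit_subshift y"
  by (cases \<omega>) (simp add: prodshift_def sturm_shift_in orbit_shift_in)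


lemma coord_meas:
  fixes M :: "((int \<Rightarrow> nat) \<times> (int \<Rightarrow> 'b)) measure"
  assumes sM: "sets M = sets (restrict_space (seq_pair_space :: ((int \<Rightarrow> nat) \<times> (int \<Rightarrow> 'b)) measure) S)"
  shows "(\<lambda>\<omega>. fst \<omega> m) \<in> measurable M (count_space UNIV)"
proof -
  have "(\<lambda>\<omega>. fst \<omega> m) \<in> measurable (seq_pair_space :: ((int \<Rightarrow> nat) \<times> (int \<Rightarrow> 'b)) measure) (count_space UNIV)"
    unfolding seq_pair_space_def by measurable
  then have "(\<lambda>\<omega>. fst \<omega> m) \<in> measurable (restrict_space (seq_pair_space :: ((int \<Rightarrow> nat) \<times> (int \<Rightarrow> 'b)) measure) S) (count_space UNIV)"
    by (rule measurable_restrict_space1)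
  then show ?thesis by (subst measurable_cong_sets[OF sM refl])
qed

lemma coord_eq_pred:
  fixes M :: "((int \<Rightarrow> nat) \<times> (int \<Rightarrow> 'b)) measure"
  assumes sM: "sets M = sets (restrict_space (seq_pair_space :: ((int \<Rightarrow> nat) \<times> (int \<Rightarrow> 'b)) measure) S)"
  shows "Measurable.pred M (\<lambda>\<omega>. fst \<omega> a = fst \<omega> b)"
proof -
  have "Measurable.pred M (\<lambda>\<omega>. \<exists>v. fst \<omega> a = v \<and> fst \<omega> b = v)"
    by (intro pred_intros_countable(2) pred_intros_logic(3) pred_count_space_const1 coord_meas[OF sM])
  moreover have "(\<lambda>\<omega>::(int \<Rightarrow> nat) \<times> (int \<Rightarrow> 'b). \<exists>v. fst \<omega> a = v \<and> fst \<omega> b = v) = (\<lambda>\<omega>. fst \<omega> a = fst \<omega> b)" by (rule ext) auto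
  ultimately show ?thesis by simp
qed


theorem proposition3p45:
  fixes \<alpha> :: real and p :: nat and y :: "int \<Rightarrow> 'b::finite"
    and \<rho> :: "((int \<Rightarrow> nat) \<times> (int \<Rightarrow> 'b)) measure"
    and f :: "(int \<Rightarrow> nat) \<times> (int \<Rightarrow> 'b) \<Rightarrow> real"
  assumes "0 < \<alpha>" "\<alpha> < 1" "\<alpha> \<notin> \<rat>"
    and "p > 0" "\<forall>n. y (n + int p) = y n"
    and "sets \<rho> = sets (restrict_space seq_pair_space
                      (sturmian_subshift \<alpha> \<times> orbit_subshift y))"
    and "ergodic_measure \<rho> (prodshift 1)"
    and "\<exists>(n::int) (k::nat) (g :: nat list \<Rightarrow> (int \<Rightarrow> 'b) \<Rightarrow> real).
           \<forall>x \<in> sturmian_subshift \<alpha>. \<forall>x' \<in> orbit_subshift y.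
             f (x, x') = g (map (\<lambda>i. x (n + int i)) [0..<k]) x'"
    and "limsup (\<lambda>n. ereal (real (cf_digit \<alpha> n))) \<ge> ereal (real (4 * p))"
  shows "AE \<omega> in \<rho>. \<not> has_eigenvalue (\<lambda>j. f (prodshift j \<omega>))"
proof -
  note a0 = assms(1) and a1 = assms(2) and ar = assms(3)
  obtain n0 k0 g where fg: "\<forall>x \<in> sturmian_subshift \<alpha>. \<forall>x' \<in> orbit_subshift y.
             f (x, x') = g (map (\<lambda>i. x (n0 + int i)) [0..<k0]) x'" using assms(8) by blast
  define P where "P = int p"
  have P1: "P \<ge> 1" using assms(4) by (simp add: P_def)
  define Sp where "Sp = sturmian_subshift \<alpha> \<times> orbit_subshift y"
  have spc: "space \<rho> = Sp" using sets_eq_imp_space_eq[OF assms(6)]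
    by (simp add: space_restrict_space space_seq_pair Sp_def)
  define T :: "(int \<Rightarrow> nat) \<times> (int \<Rightarrow> 'b) \<Rightarrow> (int \<Rightarrow> nat) \<times> (int \<Rightarrow> 'b)" where "T = prodshift 1"
  have ps: "prob_space \<rho>" and Tm: "T \<in> measurable \<rho> \<rho>"
    and pres: "\<forall>A \<in> sets \<rho>. emeasure \<rho> (T -` A \<inter> space \<rho>) = emeasure \<rho> A"
    and inv: "\<forall>A \<in> sets \<rho>. T -` A \<inter> space \<rho> = A \<longrightarrow> emeasure \<rho> A = 0 \<or> emeasure \<rho> A = 1"
    using assms(7) unfolding ergodic_measure_def T_def by auto
  interpret prob_space \<rho> by (rule ps)
  have Vf: "f (prodshift j \<omega>) = g (map (\<lambda>i. fst \<omega> (n0 + int i + j)) [0..<k0]) (shiftZ j (snd \<omega>))"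
    if "\<omega> \<in> Sp" for \<omega> j
  proof -
    have "prodshift j \<omega> \<in> Sp" using prodshift_in that unfolding Sp_def by blast
    then have "f (prodshift j \<omega>) = g (map (\<lambda>i. fst (prodshift j \<omega>) (n0 + int i)) [0..<k0]) (snd (prodshift j \<omega>))"
      using fg unfolding Sp_def by (cases "prodshift j \<omega>") auto
    then show ?thesis by (simp add: prodshift_def shiftZ_def add.assoc)
  qed
  have per: "shiftZ (j + P * t) (snd \<omega>) = shiftZ j (snd \<omega>)" if "\<omega> \<in> Sp" for \<omega> j t
  proof -
    have "snd \<omega> \<in> orbit_subshift y" using that unfolding Sp_def by (cases \<omega>) auto
    then obtain c where c: "snd \<omega> = shiftZ c y" unfolding orbit_subshift_def by blast
    show ?thesis
    proof (rule ext)
      fix m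
      have "y ((m + j + c) + int p * t) = y (m + j + c)" by (rule periodic_shift[OF assms(5)])
      then show "shiftZ (j + P * t) (snd \<omega>) m = shiftZ j (snd \<omega>) m"
        by (simp add: c shiftZ_def P_def algebra_simps)
    qed
  qed
  define Kset where "Kset k \<longleftrightarrow> cf_digit \<alpha> k \<ge> 4 * p \<and> qq \<alpha> k \<ge> 2 * int k0 + 8" for k
  have Kinf: "\<exists>k\<ge>K. Kset k" for K
  proof -
    obtain k where k: "k \<ge> max K (2 * k0 + 8)" "cf_digit \<alpha> k \<ge> 4 * p"
      using limsup_inf[OF assms(9), of "max K (2 * k0 + 8)"] assms(4) by auto
    have "qq \<alpha> k \<ge> int k" by (rule qq_ge_n[OF a0 a1 ar])
    then show ?thesis using k unfolding Kset_def by (intro exI[of _ k]) auto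
  qed
  define good where "good k x \<longleftrightarrow> goodw P n0 (int k0) (qq \<alpha> k) x" for k x
  have noeig: "\<not> has_eigenvalue (\<lambda>j. f (prodshift j \<omega>))"
    if w: "\<omega> \<in> Sp" and inf: "\<forall>K. \<exists>k\<ge>K. Kset k \<and> good k (fst \<omega>)" for \<omega>
  proof (rule no_eigen_from_good[OF P1])
    show "\<forall>j. f (prodshift j \<omega>) = g (map (\<lambda>i. fst \<omega> (n0 + int i + j)) [0..<k0]) (shiftZ j (snd \<omega>))"
      using Vf[OF w] by blast
    show "\<forall>j t. shiftZ (j + P * t) (snd \<omega>) = shiftZ j (snd \<omega>)" using per[OF w] by blast
    show "\<forall>N::nat. \<exists>q. q \<ge> int N \<and> goodw P n0 (int k0) q (fst \<omega>)"
    proof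
      fix N :: nat
      obtain k where k: "k \<ge> N" "good k (fst \<omega>)" using inf by blast
      have "qq \<alpha> k \<ge> int k" by (rule qq_ge_n[OF a0 a1 ar])
      then show "\<exists>q. q \<ge> int N \<and> goodw P n0 (int k0) q (fst \<omega>)"
        using k unfolding good_def by (intro exI[of _ "qq \<alpha> k"]) auto
    qed
  qed
  note [measurable] = coord_eq_pred[OF assms(6)]
  have U_meas: "{\<omega> \<in> space \<rho>. \<exists>j::int. \<forall>K. \<exists>k\<ge>K. Kset k \<and> good k (shiftZ j (fst \<omega>))} \<in> sets \<rho>"
    unfolding good_def goodw_def cleanI_def shiftZ_def by measurable
  have A_meas: "{\<omega> \<in> space \<rho>. \<exists>k\<ge>K. Kset k \<and> good k (fst \<omega>)} \<in> sets \<rho>" for K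
    unfolding good_def goodw_def cleanI_def shiftZ_def by measurable
  have B_meas: "{\<omega> \<in> space \<rho>. \<not> good k (shiftZ j (fst \<omega>))} \<in> sets \<rho>" for k j
    unfolding good_def goodw_def cleanI_def shiftZ_def by measurable
  have Tsp: "T \<omega> \<in> space \<rho>" if "\<omega> \<in> space \<rho>" for \<omega> using measurable_space[OF Tm that] .
  have fstT: "fst (T \<omega>) = shiftZ 1 (fst \<omega>)" for \<omega> by (simp add: T_def prodshift_def)
  have sepK: "\<forall>m m'. fst \<omega> m \<noteq> fst \<omega> (m + qq \<alpha> k) \<and> fst \<omega> m' \<noteq> fst \<omega> (m' + qq \<alpha> k) \<longrightarrow>
       \<bar>m - m'\<bar> \<le> 1 \<or> \<bar>m - m'\<bar> \<ge> 4 * P * qq \<alpha> k - 1"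
    if K: "Kset k" and w: "\<omega> \<in> Sp" for k \<omega>
  proof (intro allI impI)
    fix m m' assume d: "fst \<omega> m \<noteq> fst \<omega> (m + qq \<alpha> k) \<and> fst \<omega> m' \<noteq> fst \<omega> (m' + qq \<alpha> k)"
    have "fst \<omega> \<in> sturmian_subshift \<alpha>" using w unfolding Sp_def by (cases \<omega>) auto
    then obtain th where th: "fst \<omega> = sturm_s \<alpha> th \<or> fst \<omega> = sturm_s' \<alpha> th"
      unfolding sturmian_subshift_def by blast
    have sep: "\<bar>m - m'\<bar> \<le> 1 \<or> \<bar>m - m'\<bar> \<ge> qq \<alpha> (Suc k) - 1"
      using defect_sep[OF a0 a1 ar th] d by blast
    have "qq \<alpha> (Suc k) \<ge> int (cf_digit \<alpha> k) * qq \<alpha> k" by (rule qq_Suc_ge[OF a0 a1 ar])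
    moreover have "int (cf_digit \<alpha> k) * qq \<alpha> k \<ge> (4 * P) * qq \<alpha> k"
      using K qq_pos[OF a0 a1 ar, of k] unfolding Kset_def P_def by (intro mult_right_mono) auto
    ultimately show "\<bar>m - m'\<bar> \<le> 1 \<or> \<bar>m - m'\<bar> \<ge> 4 * P * qq \<alpha> k - 1" using sep by linarith
  qed
  have mgood: "measure \<rho> {\<omega> \<in> space \<rho>. good k (fst \<omega>)} \<ge> 1 / (4 * P)" if K: "Kset k" for k
  proof -
    define q where "q = qq \<alpha> k"
    have q8: "q \<ge> 2 * int k0 + 8" using K unfolding Kset_def q_def by simp
    define R where "R = nat (2 * P * q)"
    define B where "B = nat ((2 * P - 1) * q + int k0 + 4)"
    have Pq: "P * q \<ge> q" using P1 q8 by (simp add: mult_right_mono[of 1 P q, simplified])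
    have Rr: "real R = 2 * real_of_int P * real_of_int q" using Pq q8 unfolding R_def by simp
    have Br: "real B = (2 * real_of_int P - 1) * real_of_int q + real k0 + 4"
    proof -
      have e: "(2 * P - 1) * q + int k0 + 4 = 2 * (P * q) - q + int k0 + 4" by (simp add: algebra_simps)
      have "(2 * P - 1) * q + int k0 + 4 \<ge> 0" using Pq q8 e by linarith
      then show ?thesis unfolding B_def by simp
    qed
    define bad where "bad i = {\<omega> \<in> space \<rho>. \<not> good k (shiftZ (int i) (fst \<omega>))}" for i :: nat
    have bad_meas: "bad i \<in> sets \<rho>" for i unfolding bad_def by (rule B_meas)
    have bad_Suc: "bad (Suc i) = T -` bad i \<inter> space \<rho>" for i
    proof -
      have "shiftZ (int i) (shiftZ 1 x) = shiftZ (int (Suc i)) x" for x :: "int \<Rightarrow> nat"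
        by (simp add: shiftZ_shiftZ add.commute)
      then show ?thesis unfolding bad_def using Tsp by (auto simp: fstT)
    qed
    have meq: "measure \<rho> (bad i) = measure \<rho> (bad 0)" for i
    proof (induction i)
      case 0 then show ?case by simp
    next
      case (Suc i)
      have "measure \<rho> (bad (Suc i)) = measure \<rho> (bad i)"
        unfolding bad_Suc measure_def using pres bad_meas by simp
      then show ?case using Suc by simp
    qed
    have cnt: "(\<Sum>i<R. indicator (bad i) \<omega>) \<le> real B" if w: "\<omega> \<in> space \<rho>" for \<omega>
    proof -
      have "(\<Sum>i<R. indicator (bad i) \<omega> :: real) = (\<Sum>i<R. if \<not> good k (shiftZ (int i) (fst \<omega>)) then 1 else 0)"
        using w by (intro sum.cong) (auto simp: bad_def indicator_def)
      also have "\<dots> = real (card {i \<in> {..<R}. \<not> good k (shiftZ (int i) (fst \<omega>))})"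
        by (simp add: sum.inter_filter[symmetric])
      also have "{i \<in> {..<R}. \<not> good k (shiftZ (int i) (fst \<omega>))}
          = {i::nat. i < nat (2 * P * q) \<and> \<not> goodw P n0 (int k0) q (shiftZ (int i) (fst \<omega>))}"
        by (auto simp: R_def good_def q_def)
      also have "card {i::nat. i < nat (2 * P * q) \<and> \<not> goodw P n0 (int k0) q (shiftZ (int i) (fst \<omega>))} \<le> B"
        unfolding B_def
        by (rule bad_count[OF P1 q8]) (use sepK[OF K, of \<omega>] w spc in \<open>auto simp: q_def\<close>)
      finally show ?thesis by simp
    qed
    have integ: "integrable \<rho> (indicator (bad i) :: _ \<Rightarrow> real)" for i
      by (rule integrable_real_indicator[OF bad_meas]) (simp add: less_top[symmetric])
    have "(\<Sum>i<R. measure \<rho> (bad i)) = (\<Sum>i<R. measure \<rho> (bad 0))" by (rule sum.cong[OF refl meq])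
    then have "real R * measure \<rho> (bad 0) = (\<Sum>i<R. measure \<rho> (bad i))" by simp
    also have "\<dots> = (\<Sum>i<R. integral\<^sup>L \<rho> (indicator (bad i)))"
      by (intro sum.cong refl) (simp add: integral_indicator sets.Int_space_eq2[OF bad_meas])
    also have "\<dots> = integral\<^sup>L \<rho> (\<lambda>\<omega>. \<Sum>i<R. indicator (bad i) \<omega>)"
    proof -
      have "integral\<^sup>L \<rho> (\<lambda>\<omega>. \<Sum>i\<in>{..<R}. indicator (bad i) \<omega> :: real) = (\<Sum>i\<in>{..<R}. integral\<^sup>L \<rho> (\<lambda>\<omega>. indicator (bad i) \<omega> :: real))"
        by (rule Bochner_Integration.integral_sum) (rule integ)
      then show ?thesis by simp
    qed
    also have "\<dots> \<le> integral\<^sup>L \<rho> (\<lambda>_. real B)"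
      by (rule integral_mono) (auto intro: integrable_sum integ cnt)
    also have "\<dots> = real B" by (simp add: prob_space)
    finally have RB: "real R * measure \<rho> (bad 0) \<le> real B" .
    have gs: "{\<omega> \<in> space \<rho>. good k (fst \<omega>)} = space \<rho> - bad 0" by (auto simp: bad_def shiftZ_0)
    have pc: "measure \<rho> (space \<rho> - bad 0) = 1 - measure \<rho> (bad 0)" by (rule prob_compl[OF bad_meas])
    define m0 where "m0 = measure \<rho> (bad 0)"
    define X where "X = real_of_int P"
    define Y where "Y = real_of_int q"
    have X1: "X \<ge> 1" using P1 unfolding X_def by simp
    have Y8: "Y \<ge> 2 * real k0 + 8" using q8 unfolding Y_def by simp
    have RB': "2 * X * Y * m0 \<le> (2 * X - 1) * Y + real k0 + 4"
      using RB Rr Br unfolding m0_def X_def Y_def by simp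
    have "Y * (2 * X * (1 - m0)) \<ge> Y * (1 / 2)"
      using RB' Y8 by (simp add: algebra_simps)
    moreover have Ypos: "Y > 0" using Y8 of_nat_0_le_iff[of k0] by linarith
    ultimately have "2 * X * (1 - m0) \<ge> 1 / 2" using mult_le_cancel_left_pos[OF Ypos] by blast
    then have "1 - m0 \<ge> 1 / (4 * X)" using X1 by (simp add: field_simps)
    then show ?thesis using gs pc unfolding m0_def X_def by simp
  qed
  define A where "A K = {\<omega> \<in> space \<rho>. \<exists>k\<ge>K. Kset k \<and> good k (fst \<omega>)}" for K :: nat
  have AM: "A K \<in> sets \<rho>" for K unfolding A_def by (rule A_meas)
  have A_ge: "measure \<rho> (A K) \<ge> 1 / (4 * P)" for K
  proof -
    obtain k where k: "k \<ge> K" "Kset k" using Kinf by blast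
    have "{\<omega> \<in> space \<rho>. good k (fst \<omega>)} \<subseteq> A K" using k unfolding A_def by auto
    then have "measure \<rho> {\<omega> \<in> space \<rho>. good k (fst \<omega>)} \<le> measure \<rho> (A K)"
      by (intro finite_measure_mono AM)
    then show ?thesis using mgood[OF k(2)] by linarith
  qed
  have dec: "decseq A" unfolding decseq_def A_def by (auto intro: order_trans)
  have lim: "(\<lambda>K. measure \<rho> (A K)) \<longlonglongrightarrow> measure \<rho> (\<Inter> (range A))"
    by (rule finite_Lim_measure_decseq) (use AM dec in auto)
  have Ainf: "measure \<rho> (\<Inter> (range A)) \<ge> 1 / (4 * P)"
    by (rule LIMSEQ_le_const[OF lim]) (use A_ge in auto)
  define U where "U = {\<omega> \<in> space \<rho>. \<exists>j::int. \<forall>K. \<exists>k\<ge>K. Kset k \<and> good k (shiftZ j (fst \<omega>))}"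
  have UM: "U \<in> sets \<rho>" unfolding U_def by (rule U_meas)
  have AU: "\<Inter> (range A) \<subseteq> U"
  proof
    fix \<omega> assume "\<omega> \<in> \<Inter> (range A)"
    then have "\<omega> \<in> space \<rho>" "\<forall>K. \<exists>k\<ge>K. Kset k \<and> good k (fst \<omega>)" unfolding A_def by auto
    then have "\<omega> \<in> space \<rho>" "\<forall>K. \<exists>k\<ge>K. Kset k \<and> good k (shiftZ 0 (fst \<omega>))" by (simp_all add: shiftZ_0)
    then show "\<omega> \<in> U" unfolding U_def by blast
  qed
  have Uinv: "T -` U \<inter> space \<rho> = U"
  proof (intro equalityI subsetI)
    fix \<omega> assume "\<omega> \<in> T -` U \<inter> space \<rho>"
    then have TU: "T \<omega> \<in> U" and w: "\<omega> \<in> space \<rho>" by auto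
    from TU obtain j where "\<forall>K. \<exists>k\<ge>K. Kset k \<and> good k (shiftZ j (fst (T \<omega>)))"
      unfolding U_def by blast
    then have "\<forall>K. \<exists>k\<ge>K. Kset k \<and> good k (shiftZ (j + 1) (fst \<omega>))"
      by (simp add: fstT shiftZ_shiftZ)
    then show "\<omega> \<in> U" using w unfolding U_def by blast
  next
    fix \<omega> assume "\<omega> \<in> U"
    then have w: "\<omega> \<in> space \<rho>" and "\<exists>j. \<forall>K. \<exists>k\<ge>K. Kset k \<and> good k (shiftZ j (fst \<omega>))" unfolding U_def by auto
    then obtain j where j: "\<forall>K. \<exists>k\<ge>K. Kset k \<and> good k (shiftZ j (fst \<omega>))" by blast
    have "shiftZ (j - 1) (fst (T \<omega>)) = shiftZ j (fst \<omega>)" by (simp add: fstT shiftZ_shiftZ)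
    then have "\<forall>K. \<exists>k\<ge>K. Kset k \<and> good k (shiftZ (j - 1) (fst (T \<omega>)))" using j by simp
    then have "T \<omega> \<in> U" using Tsp[OF w] unfolding U_def by blast
    then show "\<omega> \<in> T -` U \<inter> space \<rho>" using w by simp
  qed
  have "emeasure \<rho> U = 0 \<or> emeasure \<rho> U = 1" using inv UM Uinv by blast
  moreover have "measure \<rho> U \<ge> 1 / (4 * P)"
    using finite_measure_mono[OF AU UM] Ainf by linarith
  moreover have "1 / (4 * real_of_int P) > 0" using P1 by simp
  ultimately have "emeasure \<rho> U = 1" by (auto simp: emeasure_eq_measure)
  then have "measure \<rho> U = 1" by (simp add: emeasure_eq_measure)
  then have "measure \<rho> (space \<rho> - U) = 0" using prob_compl[OF UM] by simp
  then have null: "space \<rho> - U \<in> null_sets \<rho>"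
    using UM by (simp add: null_sets_def emeasure_eq_measure)
  have noU: "\<not> has_eigenvalue (\<lambda>j. f (prodshift j \<omega>))" if "\<omega> \<in> U" for \<omega>
  proof
    assume e: "has_eigenvalue (\<lambda>j. f (prodshift j \<omega>))"
    from that obtain j where w: "\<omega> \<in> space \<rho>" and j: "\<forall>K. \<exists>k\<ge>K. Kset k \<and> good k (shiftZ j (fst \<omega>))"
      unfolding U_def by blast
    define \<omega>' where "\<omega>' = prodshift j \<omega>"
    have w': "\<omega>' \<in> Sp" using prodshift_in w spc unfolding \<omega>'_def Sp_def by blast
    have "fst \<omega>' = shiftZ j (fst \<omega>)" by (simp add: \<omega>'_def prodshift_def)
    then have "\<not> has_eigenvalue (\<lambda>i. f (prodshift i \<omega>'))" using noeig[OF w'] j by simp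
    moreover have "has_eigenvalue (\<lambda>i. f (prodshift i \<omega>'))"
      using eigen_shift[OF e, of j] by (simp add: \<omega>'_def prodshift_add)
    ultimately show False by simp
  qed
  show ?thesis
    by (rule AE_I'[OF null]) (use noU U_def in auto)
qed

end
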